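(* (i) For every positive integer $n$, $$s(n):=\frac{2}{n}\sum_{k=1}^n (2k+1)M_k^2\in\mathbb{Z}.$$ (ii) For every prime $p>3$, $$\sum_{k=0}^{p-1}(2k+1)M_k^2\equiv 12p\left(\frac{p}{3}\right)\pmod{p^2}.$$
   Context: For $n\in\mathbb{N}=\{0,1,2,\dots\}$, $M_n$ denotes the Motzkin number $M_n=\sum_{k=0}^{\lfloor n/2\rfloor}\binom{n}{2k}C_k$, where $C_k=\binom{2k}{k}/(k+1)$ is the Catalan number. $\left(\frac{p}{3}\right)$ is the Legendre symbol. *)

theory Defs
  imports "HOL-Number_Theory.Number_Theory"
begin

definition catalan :: "nat \<Rightarrow> nat" where
  "catalan k = ((2*k) choose k) div (k+1)"

definition motzkin :: "nat \<Rightarrow> nat" where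
  "motzkin n = (\<Sum>k=0..n div 2. (n choose (2*k)) * catalan k)"

end

theory Submission
  imports Defs "HOL-Computational_Algebra.Polynomial"
begin


definition tq :: "nat \<Rightarrow> nat \<Rightarrow> rat" where
  "tq n k = (if 2*k \<le> n then fact n / (fact k * fact (k+1) * fact (n - 2*k)) else 0)"

definition Gq :: "nat \<Rightarrow> nat \<Rightarrow> rat" where
  "Gq n k = (if 1 \<le> k \<and> 2*k \<le> n+1 then -4 * fact n / (fact (k-1) * fact k * fact (n+1-2*k)) else 0)"

lemma zeil_A:
  assumes "n = 2*k+s+1"
  shows "of_nat (n+3) * tq (n+1) k - of_nat (2*n+3) * tq n k - of_nat (3*n) * tq (n-1) k
         = Gq n (k+1) - Gq n k"
proof -
  define a :: rat where "a = fact k"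
  define b :: rat where "b = fact s"
  define c :: rat where "c = fact (2*k+s)"
  define K :: rat where "K = of_nat k + 1"
  define S1 :: rat where "S1 = of_nat s + 1"
  define S2 :: rat where "S2 = of_nat s + 2"
  define N1 :: rat where "N1 = 2 * of_nat k + of_nat s + 1"
  define N2 :: rat where "N2 = 2 * of_nat k + of_nat s + 2"
  have nz: "a \<noteq> 0" "b \<noteq> 0" "K \<noteq> 0" "S1 \<noteq> 0" "S2 \<noteq> 0"
    unfolding a_def b_def K_def S1_def S2_def by (simp_all add: add_nonneg_eq_0_iff)
  have e1: "(fact (k+1) :: rat) = K * a" unfolding K_def a_def by (simp add: algebra_simps)
  have e2: "(fact (s+1) :: rat) = S1 * b" unfolding S1_def b_def by (simp add: algebra_simps)
  have e3: "(fact (s+2) :: rat) = S2 * S1 * b" unfolding S1_def S2_def b_def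
    by (simp add: fact_Suc algebra_simps)
  have e4: "(fact (2*k+s+1) :: rat) = N1 * c" unfolding N1_def c_def by (simp add: algebra_simps)
  have e5: "(fact (2*k+s+2) :: rat) = N2 * N1 * c" unfolding N1_def N2_def c_def
    by (simp add: fact_Suc algebra_simps)
  define X where "X = c / (a * (K * a) * (S2 * S1 * b))"
  have t1: "tq (n+1) k = X * N2 * N1"
  proof -
    have "tq (n+1) k = fact (2*k+s+2) / (fact k * fact (k+1) * fact (s+2))"
      unfolding tq_def using assms by (simp add: numeral_eq_Suc)
    also have "\<dots> = N2 * N1 * c / (a * (K * a) * (S2 * S1 * b))"
      by (simp only: e1 e3 e5 flip: a_def)
    finally show ?thesis unfolding X_def using nz by (simp add: field_simps)
  qed
  have t2: "tq n k = X * N1 * S2"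
  proof -
    have "tq n k = fact (2*k+s+1) / (fact k * fact (k+1) * fact (s+1))"
      unfolding tq_def using assms by simp
    also have "\<dots> = N1 * c / (a * (K * a) * (S1 * b))"
      by (simp only: e1 e2 e4 flip: a_def)
    finally show ?thesis unfolding X_def using nz by (simp add: field_simps)
  qed
  have t3: "tq (n-1) k = X * S1 * S2"
  proof -
    have "tq (n-1) k = fact (2*k+s) / (fact k * fact (k+1) * fact s)"
      unfolding tq_def using assms by simp
    also have "\<dots> = c / (a * (K * a) * b)"
      by (simp only: e1 flip: a_def b_def c_def)
    finally show ?thesis unfolding X_def using nz by (simp add: field_simps)
  qed
  have g1: "Gq n (k+1) = -4 * X * N1 * S1 * S2"
  proof -
    have "Gq n (k+1) = -4 * fact (2*k+s+1) / (fact k * fact (k+1) * fact s)"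
      unfolding Gq_def using assms by simp
    also have "\<dots> = -4 * (N1 * c) / (a * (K * a) * b)"
      by (simp only: e1 e4 flip: a_def b_def)
    finally show ?thesis unfolding X_def using nz by (simp add: field_simps)
  qed
  have g2: "Gq n k = -4 * X * N1 * of_nat k * K"
  proof (cases k)
    case 0 then show ?thesis by (simp add: Gq_def)
  next
    case (Suc j)
    have fk: "a = of_nat k * fact (k-1)" unfolding a_def using Suc by simp
    have fk0: "(fact (k-1)::rat) \<noteq> 0" by simp
    have "Gq n k = -4 * fact (2*k+s+1) / (fact (k-1) * fact k * fact (s+2))"
      unfolding Gq_def using assms Suc by (simp add: numeral_eq_Suc)
    also have "\<dots> = -4 * (N1 * c) / (fact (k-1) * a * (S2 * S1 * b))"
      by (simp only: e3 e4 flip: a_def)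
    finally have cal0: "Gq n k = -4 * (N1 * c) / (fact (k-1) * a * (S2 * S1 * b))" .
    have kz: "(of_nat k :: rat) \<noteq> 0" using Suc by simp
    define d :: rat where "d = fact (k-1)"
    note fk' = fk[folded d_def]
    have dz: "d \<noteq> 0" unfolding d_def by simp
    note cal = cal0[folded d_def]
    show ?thesis unfolding cal X_def fk' using nz(2-5) dz kz by (simp add: field_simps)
  qed
  have "of_nat (n+3) = N2 + 2" "of_nat (2*n+3) = 2*N1 + 3" "of_nat (3*n) = 3 * N1"
    "S2 = S1 + 1" "N1 = 2 * of_nat k + S1" "of_nat n = 2 * of_nat k + S1" "K = of_nat k + 1" "N2 = N1 + 1"
    unfolding N1_def N2_def S1_def S2_def K_def using assms by simp_all
  then show ?thesis unfolding t1 t2 t3 g1 g2 by (simp add: algebra_simps)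
qed




lemma zeil_B:
  assumes "n = 2*k" "k \<ge> 1"
  shows "of_nat (n+3) * tq (n+1) k - of_nat (2*n+3) * tq n k - of_nat (3*n) * tq (n-1) k
         = Gq n (k+1) - Gq n k"
proof -
  define a :: rat where "a = fact k"
  define d :: rat where "d = fact (k-1)"
  define c :: rat where "c = fact (2*k)"
  define K :: rat where "K = of_nat k + 1"
  define kk :: rat where "kk = of_nat k"
  have nz: "d \<noteq> 0" "K \<noteq> 0" "kk \<noteq> 0"
    unfolding d_def K_def kk_def using assms by (simp_all add: add_nonneg_eq_0_iff)
  have e0: "a = kk * d" unfolding a_def kk_def d_def using assms
    using fact_reduce[of k] by simp
  have e1: "(fact (k+1) :: rat) = K * a" unfolding K_def a_def by (simp add: algebra_simps)
  have e4: "(fact (2*k+1) :: rat) = (2*kk+1) * c" unfolding kk_def c_def by (simp add: algebra_simps)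
  have t1: "tq (n+1) k = (2*kk+1) * c / (a * (K * a))"
  proof -
    have "tq (n+1) k = fact (2*k+1) / (fact k * fact (k+1))"
      unfolding tq_def using assms by simp
    then show ?thesis by (simp only: e1 e4 flip: a_def)
  qed
  have t2: "tq n k = c / (a * (K * a))"
  proof -
    have "tq n k = fact (2*k) / (fact k * fact (k+1))"
      unfolding tq_def using assms by simp
    then show ?thesis by (simp only: e1 flip: a_def c_def)
  qed
  have t3: "tq (n-1) k = 0" unfolding tq_def using assms by simp
  have g1: "Gq n (k+1) = 0" unfolding Gq_def using assms by simp
  have g2: "Gq n k = -4 * c / (d * a)"
  proof -
    have "Gq n k = -4 * fact (2*k) / (fact (k-1) * fact k)"
      unfolding Gq_def using assms by simp
    then show ?thesis by (simp only: flip: a_def c_def d_def)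
  qed
  have h: "of_nat (n+3) = 2*kk+3" "of_nat (2*n+3) = 4*kk+3"
    unfolding kk_def K_def using assms by simp_all
  have hK: "K = kk + 1" unfolding kk_def K_def by simp
  show ?thesis unfolding t1 t2 t3 g1 g2 e0 h using nz by (simp add: field_simps) (simp add: hK algebra_simps)
qed

lemma zeil_C:
  assumes "n + 1 = 2*k" "n \<ge> 1"
  shows "of_nat (n+3) * tq (n+1) k - of_nat (2*n+3) * tq n k - of_nat (3*n) * tq (n-1) k
         = Gq n (k+1) - Gq n k"
proof -
  have k1: "k \<ge> 1" using assms by simp
  define a :: rat where "a = fact k"
  define d :: rat where "d = fact (k-1)"
  define c :: rat where "c = fact (2*k-1)"
  define K :: rat where "K = of_nat k + 1"
  define kk :: rat where "kk = of_nat k"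
  have nz: "d \<noteq> 0" "K \<noteq> 0" "kk \<noteq> 0"
    unfolding d_def K_def kk_def using k1 by (simp_all add: add_nonneg_eq_0_iff)
  have e0: "a = kk * d" unfolding a_def kk_def d_def using k1
    using fact_reduce[of k] by simp
  have e1: "(fact (k+1) :: rat) = K * a" unfolding K_def a_def by (simp add: algebra_simps)
  have e4: "(fact (2*k) :: rat) = (2*kk) * c" unfolding kk_def c_def using k1
    using fact_reduce[of "2*k"] by simp
  have t1: "tq (n+1) k = (2*kk) * c / (a * (K * a))"
  proof -
    have "tq (n+1) k = fact (2*k) / (fact k * fact (k+1))"
      unfolding tq_def using assms by simp
    then show ?thesis by (simp only: e1 e4 flip: a_def)
  qed
  have t2: "tq n k = 0" unfolding tq_def using assms by simp
  have t3: "tq (n-1) k = 0" unfolding tq_def using assms by simp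
  have g1: "Gq n (k+1) = 0" unfolding Gq_def using assms by simp
  have g2: "Gq n k = -4 * c / (d * a)"
  proof -
    have "n = 2*k-1" using assms by simp
    then have "Gq n k = -4 * fact (2*k-1) / (fact (k-1) * fact k)"
      unfolding Gq_def using assms k1 by simp
    then show ?thesis by (simp only: flip: a_def c_def d_def)
  qed
  have h: "of_nat (n+3) = 2*kk+2"
    unfolding kk_def K_def using assms by (simp add: of_nat_add[symmetric] del: of_nat_add)
  have hK: "K = kk + 1" unfolding kk_def K_def by simp
  show ?thesis unfolding t1 t2 t3 g1 g2 e0 h using nz by (simp add: field_simps) (simp add: hK algebra_simps)
qed

lemma zeil:
  assumes "n \<ge> 1"
  shows "of_nat (n+3) * tq (n+1) k - of_nat (2*n+3) * tq n k - of_nat (3*n) * tq (n-1) k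
         = Gq n (k+1) - Gq n k"
proof -
  consider (A) "2*k+1 \<le> n" | (B) "n = 2*k" | (C) "n+1 = 2*k" | (D) "n+2 \<le> 2*k" by linarith
  then show ?thesis
  proof cases
    case A
    define s where "s = n - 2*k - 1"
    have "n = 2*k+s+1" using A unfolding s_def by simp
    then show ?thesis by (rule zeil_A)
  next
    case B then show ?thesis using assms by (intro zeil_B) auto
  next
    case C then show ?thesis using assms by (intro zeil_C) auto
  next
    case D then show ?thesis by (simp add: tq_def Gq_def)
  qed
qed




lemma catalan_dvd: "(k+1) dvd ((2*k) choose k)"
proof -
  have "Suc (2*k) * ((2*k) choose k) = (Suc (2*k) choose Suc k) * Suc k"
    by (rule Suc_times_binomial_eq)
  then have "(k+1) dvd (2*k+1) * ((2*k) choose k)" by (metis Suc_eq_plus1 dvd_triv_right)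
  moreover have "coprime (k+1) (2*k+1)"
  proof (rule coprimeI)
    fix c assume c1: "c dvd k+1" and c2: "c dvd 2*k+1"
    have "c dvd 2*(k+1)" using c1 by (rule dvd_mult)
    then have "c dvd 2*(k+1) - (2*k+1)" using c2 by (rule dvd_diff_nat)
    then show "is_unit c" by simp
  qed
  ultimately show ?thesis using coprime_dvd_mult_right_iff by blast
qed

lemma catalan_rat: "(of_nat (catalan k) :: rat) = fact (2*k) / (fact k * fact (k+1))"
proof -
  have "catalan k * (k+1) = (2*k) choose k"
    unfolding catalan_def by (rule dvd_div_mult_self[OF catalan_dvd])
  then have "(of_nat (catalan k) :: rat) * (of_nat k + 1) = of_nat ((2*k) choose k)"
    by (metis of_nat_Suc of_nat_mult Suc_eq_plus1 add.commute)
  also have "\<dots> = fact (2*k) / (fact k * fact k)"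
    by (subst binomial_fact) auto
  finally have "(of_nat (catalan k) :: rat) = fact (2*k) / (fact k * fact k) / (of_nat k + 1)"
    by (simp add: field_simps add_nonneg_eq_0_iff)
  also have "\<dots> = fact (2*k) / (fact k * fact (k+1))"
    by (simp add: field_simps add_nonneg_eq_0_iff)
  finally show ?thesis .
qed

lemma term_tq:
  assumes "2*k \<le> n"
  shows "(of_nat ((n choose (2*k)) * catalan k) :: rat) = tq n k"
proof -
  have "(of_nat ((n choose (2*k)) * catalan k) :: rat)
        = fact n / (fact (2*k) * fact (n - 2*k)) * (fact (2*k) / (fact k * fact (k+1)))"
    using assms by (simp add: binomial_fact catalan_rat)
  also have "\<dots> = tq n k" unfolding tq_def using assms by (simp add: field_simps)
  finally show ?thesis .
qed

lemma motz_tq: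
  assumes "n div 2 < N"
  shows "(of_nat (motzkin n) :: rat) = (\<Sum>k<N. tq n k)"
proof -
  have "(of_nat (motzkin n) :: rat) = (\<Sum>k=0..n div 2. tq n k)"
    unfolding motzkin_def of_nat_sum
  proof (rule sum.cong)
    fix x assume "x \<in> {0..n div 2}"
    then have "2*x \<le> n" by auto
    then show "of_nat ((n choose (2*x)) * catalan x) = tq n x" by (rule term_tq)
  qed simp
  also have "\<dots> = (\<Sum>k<N. tq n k)"
  proof (rule sum.mono_neutral_left)
    show "finite {..<N}" by simp
    show "{0..n div 2} \<subseteq> {..<N}" using assms by auto
    show "\<forall>i\<in>{..<N} - {0..n div 2}. tq n i = 0" by (auto simp: tq_def)
  qed
  finally show ?thesis .
qed

lemma motz_rec_rat:
  assumes "n \<ge> 1"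
  shows "of_nat (n+3) * (of_nat (motzkin (n+1)) :: rat)
       = of_nat (2*n+3) * of_nat (motzkin n) + of_nat (3*n) * of_nat (motzkin (n-1))"
proof -
  let ?N = "n+2"
  have "(\<Sum>k<?N. of_nat (n+3) * tq (n+1) k - of_nat (2*n+3) * tq n k - of_nat (3*n) * tq (n-1) k)
        = (\<Sum>k<?N. Gq n (Suc k) - Gq n k)"
    using zeil[OF assms] by simp
  also have "\<dots> = Gq n ?N - Gq n 0" by (rule sum_lessThan_telescope)
  also have "\<dots> = 0" by (simp add: Gq_def)
  finally have "(\<Sum>k<?N. of_nat (n+3) * tq (n+1) k) - (\<Sum>k<?N. of_nat (2*n+3) * tq n k)
      - (\<Sum>k<?N. of_nat (3*n) * tq (n-1) k) = 0"
    by (simp add: sum_subtractf)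
  moreover have "(of_nat (motzkin (n+1)) :: rat) = (\<Sum>k<?N. tq (n+1) k)" by (rule motz_tq) simp
  moreover have "(of_nat (motzkin n) :: rat) = (\<Sum>k<?N. tq n k)" by (rule motz_tq) simp
  moreover have "(of_nat (motzkin (n-1)) :: rat) = (\<Sum>k<?N. tq (n-1) k)" by (rule motz_tq) simp
  ultimately show ?thesis by (simp add: sum_distrib_left[symmetric])
qed

lemma motz_rec:
  assumes "n \<ge> 1"
  shows "int (n+3) * int (motzkin (n+1)) = int (2*n+3) * int (motzkin n) + int (3*n) * int (motzkin (n-1))"
proof -
  have "(of_int (int (n+3) * int (motzkin (n+1))) :: rat)
      = of_int (int (2*n+3) * int (motzkin n) + int (3*n) * int (motzkin (n-1)))"
    using motz_rec_rat[OF assms] by simp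
  then show ?thesis by (rule of_int_eq_iff[THEN iffD1])
qed

lemma motz_small: "motzkin 0 = 1" "motzkin 1 = 1" "motzkin 2 = 2"
  by (simp_all add: motzkin_def catalan_def eval_nat_numeral)




abbreviation Mz :: "nat \<Rightarrow> int" where "Mz n \<equiv> int (motzkin n)"

definition Sm :: "nat \<Rightarrow> int" where
  "Sm n = (\<Sum>k=1..n. int ((2*k+1) * (motzkin k)^2))"

definition Qf :: "nat \<Rightarrow> int" where
  "Qf n = -(4*int n^2+17*int n+12) * Mz n^2 + 6*(4*int n^2+11*int n+6) * Mz n * Mz (n-1)
          - 9*int n*(4*int n+5) * Mz (n-1)^2"

definition Rf :: "nat \<Rightarrow> int" where
  "Rf n = -9*(int n+1)^2*(4*int n+9) * Mz n^2 + 6*(int n+1)*(int n+3)*(4*int n+7) * Mz n * Mz (n+1)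
          - (int n+3)^2*(4*int n+5) * Mz (n+1)^2"

lemma motz_one[simp]: "motzkin (Suc 0) = 1" "motzkin 0 = 1"
  using motz_small by simp_all

lemma motz_rec':
  assumes "n \<ge> 1"
  shows "3 * int n * Mz (n-1) = (int n + 3) * Mz (n+1) - (2 * int n + 3) * Mz n"
  using motz_rec[OF assms] by (simp add: algebra_simps)

lemma nQ_eq_R:
  assumes "n \<ge> 1"
  shows "int n * Qf n = Rf n"
proof -
  define Y where "Y = 3 * int n * Mz (n-1)"
  have "int n * Qf n = -int n*(4*int n^2+17*int n+12) * Mz n^2 + 2*(4*int n^2+11*int n+6) * Mz n * Y
          - (4*int n+5) * Y^2"
    unfolding Qf_def Y_def by (simp add: algebra_simps power2_eq_square)
  also have "\<dots> = Rf n"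
    unfolding Y_def motz_rec'[OF assms] Rf_def by (simp add: algebra_simps power2_eq_square)
  finally show ?thesis .
qed

lemma S_closed:
  assumes "n \<ge> 1"
  shows "4 * Sm n = int n * Qf n"
  using assms
proof (induction n rule: dec_induct)
  case base
  show ?case by (simp add: Sm_def Qf_def motz_small)
next
  case (step m)
  have "4 * Sm (Suc m) = 4 * Sm m + 4 * (2 * int m + 3) * Mz (Suc m)^2"
    unfolding Sm_def by (simp add: algebra_simps)
  also have "\<dots> = Rf m + 4 * (2 * int m + 3) * Mz (Suc m)^2"
    using step nQ_eq_R[OF step(1)] by simp
  also have "\<dots> = int (Suc m) * Qf (Suc m)"
    unfolding Rf_def Qf_def by (simp add: algebra_simps power2_eq_square)
  finally show ?case .
qed

lemma S_closed_R:
  assumes "n \<ge> 1"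
  shows "4 * Sm n = Rf n"
  using S_closed[OF assms] nQ_eq_R[OF assms] by simp

lemma motz_parity:
  assumes "odd n"
  shows "even (Mz n + Mz (n-1))"
proof (cases "n = 1")
  case True then show ?thesis by (simp add: motz_small)
next
  case False
  then have n2: "n \<ge> 2" using assms by (cases n) auto
  have r: "int (n-1+3) * Mz (n-1+1) = int (2*(n-1)+3) * Mz (n-1) + int (3*(n-1)) * Mz (n-1-1)"
    by (rule motz_rec) (use n2 in simp)
  have e1: "n-1+1 = n" using n2 by simp
  obtain j where j: "n = 2*j+1" using assms oddE by blast
  have "Mz n + Mz (n-1) = int (n-1+3) * Mz (n-1+1) - int (2*(n-1)+3) * Mz (n-1) - int (3*(n-1)) * Mz (n-1-1)
        - 2 * (int j + 1) * Mz n + 2 * (2*int j + 2) * Mz (n-1) + 2 * (3 * int j) * Mz (n-1-1)"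
    unfolding e1 using j by (simp add: algebra_simps)
  also have "\<dots> = 2 * (- (int j + 1) * Mz n + (2*int j + 2) * Mz (n-1) + (3 * int j) * Mz (n-1-1))"
    using r by (simp add: algebra_simps)
  finally show ?thesis by simp
qed

lemma Q_even:
  assumes "n \<ge> 1"
  shows "even (Qf n)"
proof -
  have "Qf n = - int n * (Mz n^2 + Mz (n-1)^2) + 2 * (-(2*int n^2+8*int n+6) * Mz n^2
          + 3*(4*int n^2+11*int n+6) * Mz n * Mz (n-1) - (18*int n^2+22*int n) * Mz (n-1)^2)"
    unfolding Qf_def by (simp add: algebra_simps power2_eq_square)
  moreover have "even (int n * (Mz n^2 + Mz (n-1)^2))"
  proof (cases "even n")
    case True then show ?thesis by simp
  next
    case False
    then have "even (Mz n + Mz (n-1))" by (intro motz_parity) simp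
    then have "even ((Mz n + Mz (n-1))^2 - 2 * Mz n * Mz (n-1))" by simp
    then show ?thesis by (simp add: power2_eq_square algebra_simps)
  qed
  ultimately show ?thesis by simp
qed

theorem part1:
  assumes "n \<ge> 1"
  shows "(2 / of_nat n) * (\<Sum>k=1..n. of_nat ((2*k+1) * (motzkin k)^2) :: rat) \<in> \<int>"
proof -
  obtain q where q: "Qf n = 2 * q" using Q_even[OF assms] by blast
  have "(\<Sum>k=1..n. of_nat ((2*k+1) * (motzkin k)^2) :: rat) = of_int (Sm n)"
    unfolding Sm_def by simp
  moreover have "4 * Sm n = 2 * (int n * q)" using S_closed[OF assms] q by simp
  then have "2 * Sm n = int n * q" by simp
  then have "2 * (of_int (Sm n) :: rat) = of_nat n * of_int q"
    by (metis of_int_mult of_int_of_nat_eq of_int_numeral)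
  ultimately have "(2 / of_nat n) * (\<Sum>k=1..n. of_nat ((2*k+1) * (motzkin k)^2) :: rat) = of_int q"
    using assms by (simp add: field_simps)
  then show ?thesis by simp
qed




lemma coeff_lin_pow:
  fixes a b :: "'a :: comm_semiring_1"
  shows "coeff ([:a, b:] ^ n) i = of_nat (n choose i) * b ^ i * a ^ (n - i)"
proof (cases "i \<le> n")
  case True then show ?thesis by (rule coeff_linear_poly_power)
next
  case False
  then have "degree ([:a, b:] ^ n) < i"
    using degree_power_le[of "[:a,b:]" n] by (auto intro: le_less_trans)
  then show ?thesis using False by (simp add: coeff_eq_0 binomial_eq_0)
qed

definition tr :: "nat \<Rightarrow> nat \<Rightarrow> int" where
  "tr n m = coeff ([:1,1,1:] ^ n) m"

lemma tr_formula:
  "tr n m = (\<Sum>i\<le>n. if i \<le> m then int ((n choose i) * (i choose (m - i))) else 0)"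
proof -
  have eq: "[:1,1,1:] = monom (1::int) 1 * [:1,1:] + 1"
    by (simp add: monom_Suc one_pCons)
  have "[:1,1,1:] ^ n = (\<Sum>i\<le>n. of_nat (n choose i) * (monom (1::int) 1 * [:1,1:]) ^ i * 1 ^ (n - i))"
    unfolding eq by (rule binomial_ring)
  also have "\<dots> = (\<Sum>i\<le>n. monom (int (n choose i)) i * [:1,1:] ^ i)"
  proof (rule sum.cong)
    fix i assume "i \<in> {..n}"
    have "(of_nat (n choose i) :: int poly) * (monom 1 1 * [:1,1:]) ^ i * 1 ^ (n - i)
          = monom (of_nat (n choose i)) 0 * monom 1 (1*i) * [:1,1:] ^ i"
      by (simp only: power_mult_distrib monom_power of_nat_poly monom_0 power_one mult_1_right
             mult.assoc)
    also have "\<dots> = monom (int (n choose i)) i * [:1,1:] ^ i"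
      by (simp only: mult_monom) simp
    finally show "(of_nat (n choose i) :: int poly) * (monom 1 1 * [:1,1:]) ^ i * 1 ^ (n - i)
          = monom (int (n choose i)) i * [:1,1:] ^ i" .
  qed simp
  finally have "tr n m = (\<Sum>i\<le>n. coeff (monom (int (n choose i)) i * [:1,1:] ^ i) m)"
    unfolding tr_def by (simp add: coeff_sum)
  also have "\<dots> = (\<Sum>i\<le>n. if i \<le> m then int ((n choose i) * (i choose (m - i))) else 0)"
    by (rule sum.cong) (auto simp: coeff_monom_mult coeff_lin_pow)
  finally show ?thesis .
qed




lemma catalan_int: "int (catalan k) = int ((2*k) choose k) - int ((2*k) choose (k+1))"
proof (cases k)
  case 0 then show ?thesis by (simp add: catalan_def)
next
  case (Suc j)
  define a :: rat where "a = fact (k-1)"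
  define kk :: rat where "kk = of_nat k"
  define K1 :: rat where "K1 = of_nat k + 1"
  define c :: rat where "c = fact (2*k)"
  have nz: "a \<noteq> 0" "kk \<noteq> 0" "K1 \<noteq> 0" unfolding a_def kk_def K1_def using Suc
    by (simp_all add: add_nonneg_eq_0_iff)
  have hK: "K1 = kk + 1" unfolding K1_def kk_def by simp
  have fk: "(fact k :: rat) = kk * a" unfolding kk_def a_def using Suc by (simp add: fact_reduce)
  have fk1: "(fact (k+1) :: rat) = K1 * (kk * a)" using fk unfolding kk_def K1_def by simp
  have v1: "(of_nat (catalan k) :: rat) = c / ((kk * a) * (K1 * (kk * a)))"
    unfolding c_def catalan_rat fk fk1 ..
  have v2: "(of_nat ((2*k) choose k) :: rat) = c / ((kk * a) * (kk * a))"
    unfolding c_def by (simp add: binomial_fact fk)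
  have v3: "(of_nat ((2*k) choose (k+1)) :: rat) = c / ((K1 * (kk * a)) * a)"
  proof -
    have "k+1 \<le> 2*k" "2*k - (k+1) = k-1" using Suc by auto
    then have "(of_nat ((2*k) choose (k+1)) :: rat) = fact (2*k) / (fact (k+1) * fact (k-1))"
      by (simp add: binomial_fact)
    then show ?thesis unfolding fk1 by (simp only: flip: a_def c_def)
  qed
  have "c / ((kk * a) * (kk * a)) - c / ((K1 * (kk * a)) * a) = c / ((kk * a) * (K1 * (kk * a)))"
    using nz by (simp add: field_simps) (simp add: hK algebra_simps)
  then have "(of_int (int (catalan k)) :: rat) = of_int (int ((2*k) choose k) - int ((2*k) choose (k+1)))"
    using v1 v2 v3 by simp
  then show ?thesis by (rule of_int_eq_iff[THEN iffD1])
qed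

lemma tr_nn: "tr n n = (\<Sum>j\<le>n. int ((n choose (2*j)) * ((2*j) choose j)))"
proof -
  have "tr n n = (\<Sum>i\<le>n. int ((n choose i) * (i choose (n - i))))"
    unfolding tr_formula by (rule sum.cong) auto
  also have "\<dots> = (\<Sum>j\<le>n. int ((n choose (n-j)) * ((n-j) choose (n - (n-j)))))"
    using sum.atLeastAtMost_rev[of "\<lambda>i. int ((n choose i) * (i choose (n - i)))" 0 n]
    by (simp add: atLeast0AtMost)
  also have "\<dots> = (\<Sum>j\<le>n. int ((n choose (2*j)) * ((2*j) choose j)))"
  proof (rule sum.cong)
    fix j assume j: "j \<in> {..n}"
    show "int ((n choose (n-j)) * ((n-j) choose (n - (n-j)))) = int ((n choose (2*j)) * ((2*j) choose j))"
    proof (cases "2*j \<le> n")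
      case True
      have "(n choose (2*j)) * ((2*j) choose j) = (n choose j) * ((n - j) choose (2*j - j))"
        by (rule choose_mult) (use True in auto)
      then show ?thesis using j by (simp add: binomial_symmetric[symmetric] mult_2)
    next
      case False
      then show ?thesis using j by (simp add: binomial_eq_0)
    qed
  qed simp
  finally show ?thesis .
qed

lemma tr_nn2: "tr n (n+2) = (\<Sum>k\<le>n+1. int ((n choose (2*k)) * ((2*k) choose (k+1))))"
proof -
  have "tr n (n+2) = (\<Sum>i\<le>n. int ((n choose i) * (i choose (n + 2 - i))))"
    unfolding tr_formula by (rule sum.cong) auto
  also have "\<dots> = (\<Sum>j\<le>n. int ((n choose (n-j)) * ((n-j) choose (n + 2 - (n-j)))))"
    using sum.atLeastAtMost_rev[of "\<lambda>i. int ((n choose i) * (i choose (n + 2 - i)))" 0 n]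
    by (simp add: atLeast0AtMost)
  also have "\<dots> = (\<Sum>j\<le>n. int ((n choose (2*Suc j)) * ((2*Suc j) choose (Suc j+1))))"
  proof (rule sum.cong)
    fix j assume j: "j \<in> {..n}"
    show "int ((n choose (n-j)) * ((n-j) choose (n + 2 - (n-j))))
        = int ((n choose (2*Suc j)) * ((2*Suc j) choose (Suc j+1)))"
    proof (cases "2*j+2 \<le> n")
      case True
      have "(n choose (2*j+2)) * ((2*j+2) choose j) = (n choose j) * ((n - j) choose (2*j+2 - j))"
        by (rule choose_mult) (use True in auto)
      moreover have "(2*j+2) choose j = (2*j+2) choose (j+2)"
        by (subst binomial_symmetric) auto
      moreover have "n + 2 - (n-j) = j + 2" "2*j+2-j = j+2" using j by auto
      ultimately show ?thesis using j by (simp add: binomial_symmetric[symmetric])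
    next
      case False
      then show ?thesis using j by (simp add: binomial_eq_0)
    qed
  qed simp
  also have "\<dots> = (\<Sum>k\<le>n+1. int ((n choose (2*k)) * ((2*k) choose (k+1))))"
  proof -
    define f where "f = (\<lambda>k. int ((n choose (2*k)) * ((2*k) choose (k+1))))"
    have "(\<Sum>k\<le>Suc n. f k) = f 0 + (\<Sum>j\<le>n. f (Suc j))" by (rule sum.atMost_Suc_shift)
    moreover have "f 0 = 0" unfolding f_def by simp
    ultimately show ?thesis unfolding f_def by simp
  qed
  finally show ?thesis .
qed

lemma Mz_tr: "Mz n = tr n n - tr n (n+2)"
proof -
  have "Mz n = (\<Sum>k=0..n div 2. int (n choose (2*k)) * int (catalan k))"
    unfolding motzkin_def by simp
  also have "\<dots> = (\<Sum>k\<le>n+1. int (n choose (2*k)) * int (catalan k))"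
  proof (rule sum.mono_neutral_left)
    show "\<forall>i\<in>{..n+1} - {0..n div 2}. int (n choose (2*i)) * int (catalan i) = 0"
      by (auto simp: binomial_eq_0)
  qed auto
  also have "\<dots> = (\<Sum>k\<le>n+1. int ((n choose (2*k)) * ((2*k) choose k)))
                  - (\<Sum>k\<le>n+1. int ((n choose (2*k)) * ((2*k) choose (k+1))))"
    unfolding catalan_int by (simp add: algebra_simps sum_subtractf)
  also have "(\<Sum>k\<le>n+1. int ((n choose (2*k)) * ((2*k) choose k))) = tr n n"
    unfolding tr_nn by (simp add: binomial_eq_0)
  finally show ?thesis unfolding tr_nn2 by simp
qed

lemma conv:
  "(\<Sum>i\<le>m. tr n i * ((-1)^(m-i) * int (n choose (m-i))))
   = (if 3 dvd m then (-1)^(m div 3) * int (n choose (m div 3)) else 0)"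
proof -
  have "(\<Sum>i\<le>m. tr n i * ((-1)^(m-i) * int (n choose (m-i))))
        = coeff ([:1,1,1:] ^ n * [:1,-1:] ^ n) m"
    unfolding coeff_mult tr_def coeff_lin_pow by (simp add: mult_ac)
  also have "[:1,1,1:] ^ n * [:1,-1:] ^ n = (monom (-1::int) 3 + 1) ^ n"
  proof -
    have "[:1,1,1:] * [:1,-1:] = monom (-1::int) 3 + 1"
      by (simp add: monom_Suc one_pCons numeral_3_eq_3 monom_0)
    then show ?thesis by (simp flip: power_mult_distrib)
  qed
  also have "\<dots> = (\<Sum>k\<le>n. monom (int (n choose k) * (-1)^k) (3*k))"
  proof -
    have "(monom (-1::int) 3 + 1) ^ n = (\<Sum>k\<le>n. of_nat (n choose k) * (monom (-1) 3) ^ k * 1 ^ (n - k))"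
      by (rule binomial_ring)
    also have "\<dots> = (\<Sum>k\<le>n. monom (int (n choose k) * (-1)^k) (3*k))"
    proof (rule sum.cong)
      fix k assume "k \<in> {..n}"
      have "(of_nat (n choose k) :: int poly) * (monom (-1) 3) ^ k * 1 ^ (n - k)
            = monom (of_nat (n choose k)) 0 * monom ((-1)^k) (3*k)"
        by (simp only: monom_power of_nat_poly monom_0 power_one mult_1_right)
      also have "\<dots> = monom (int (n choose k) * (-1)^k) (3*k)"
        by (simp only: mult_monom) simp
      finally show "(of_nat (n choose k) :: int poly) * (monom (-1) 3) ^ k * 1 ^ (n - k)
            = monom (int (n choose k) * (-1)^k) (3*k)" .
    qed simp
    finally show ?thesis .
  qed
  finally have "(\<Sum>i\<le>m. tr n i * ((-1)^(m-i) * int (n choose (m-i))))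
     = (\<Sum>k\<le>n. if 3*k = m then int (n choose k) * (-1)^k else 0)"
    by (simp add: coeff_sum coeff_monom eq_commute)
  also have "\<dots> = (\<Sum>k\<le>n. if k = m div 3 then (if 3 dvd m then int (n choose k) * (-1)^k else 0) else 0)"
    by (rule sum.cong) auto
  also have "\<dots> = (if 3 dvd m then (-1)^(m div 3) * int (n choose (m div 3)) else 0)"
    by (auto simp: binomial_eq_0)
  finally show ?thesis .
qed




lemma P3_mult: "[:1,1,1:] * (q :: int poly) = q + pCons 0 q + pCons 0 (pCons 0 q)"
  by (simp add: algebra_simps)

lemma tr_Suc0: "tr (Suc n) 0 = tr n 0"
  unfolding tr_def power_Suc P3_mult by simp
lemma tr_Suc1: "tr (Suc n) (Suc 0) = tr n 1 + tr n 0"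
  unfolding tr_def power_Suc P3_mult by simp
lemma tr_SucSuc: "tr (Suc n) (Suc (Suc m)) = tr n (m+2) + tr n (m+1) + tr n m"
  unfolding tr_def power_Suc P3_mult by simp

lemma tr_0: "tr n 0 = 1"
  by (induction n) (simp_all add: tr_Suc0, simp add: tr_def)

lemma tr_1: "tr n 1 = int n"
  by (induction n) (simp_all add: tr_Suc1[simplified] tr_0, simp add: tr_def)

lemma tr_2: "tr n 2 = int n + int (n choose 2)"
proof (induction n)
  case 0 then show ?case by (simp add: tr_def)
next
  case (Suc n)
  have "tr (Suc n) 2 = tr n 2 + tr n 1 + tr n 0"
    using tr_SucSuc[of n 0] by (simp add: numeral_2_eq_2)
  also have "\<dots> = int (Suc n) + int (Suc n choose 2)"
    using Suc tr_1[of n] tr_0[of n] by (simp add: numeral_2_eq_2)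
  finally show ?case .
qed




lemma sum_split_dvd:
  fixes f :: "nat \<Rightarrow> int"
  assumes "finite A" "B \<subseteq> A" "\<forall>i\<in>A-B. d dvd f i"
  shows "d dvd (sum f A - sum f B)"
proof -
  have "sum f A = sum f (A - B) + sum f B" using assms(2,1) by (rule sum.subset_diff)
  moreover have "d dvd sum f (A - B)" using assms(3) by (intro dvd_sum) auto
  ultimately show ?thesis by simp
qed

definition rc :: "nat \<Rightarrow> nat \<Rightarrow> int" where
  "rc n m = (if 3 dvd m then (-1)^(m div 3) * int (n choose (m div 3)) else 0)"

lemma conv': "(\<Sum>i\<le>m. tr n i * ((-1)^(m-i) * int (n choose (m-i)))) = rc n m"
  unfolding rc_def by (rule conv)

definition cc :: "nat \<Rightarrow> int" where
  "cc m = (if m mod 3 = 0 then 1 else if m mod 3 = 1 then -1 else 0)"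

lemma cc_rec: "cc (m+2) = - cc (m+1) - cc m"
proof -
  have "m mod 3 = 0 \<or> m mod 3 = 1 \<or> m mod 3 = 2" by auto
  moreover have "(m+1) mod 3 = (m mod 3 + 1) mod 3" "(m+2) mod 3 = (m mod 3 + 2) mod 3"
    by (metis mod_add_left_eq)+
  ultimately show ?thesis unfolding cc_def by auto
qed

context
  fixes p :: nat
  assumes pp: "prime p" and p3: "p > 3"
begin

lemma p_choose_dvd: assumes "0 < k" "k < p" shows "int p dvd int (p choose k)"
proof -
  have "p dvd (p choose k)" by (rule dvd_choose_prime) (use assms pp in auto)
  then show ?thesis by (simp only: int_dvd_int_iff)
qed

lemma not3p: "\<not> 3 dvd p"
proof
  assume a: "3 dvd p"
  have "prime (3::nat)" by simp
  then have "3 = p" using primes_dvd_imp_eq[OF _ pp a] by simp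
  then show False using p3 by simp
qed

lemma odd_p: "odd p"
  using pp p3 prime_odd_nat by auto

lemma tr_p_dvd: assumes "0 < m" "m < p" shows "int p dvd tr p m"
proof -
  define f where "f = (\<lambda>i. tr p i * ((-1)^(m-i) * int (p choose (m-i))))"
  have A: "sum f {..m} = rc p m" unfolding f_def by (rule conv')
  have B: "int p dvd (sum f {..m} - sum f {m})"
  proof (rule sum_split_dvd)
    show "\<forall>i\<in>{..m} - {m}. int p dvd f i"
    proof
      fix i assume "i \<in> {..m} - {m}"
      then have "0 < m - i" "m - i < p" using assms by auto
      then have "int p dvd int (p choose (m-i))" by (rule p_choose_dvd)
      then show "int p dvd f i" unfolding f_def by simp
    qed
  qed auto
  have C: "int p dvd rc p m"
  proof (cases "3 dvd m")
    case True
    then have "0 < m div 3" "m div 3 < p" using assms by auto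
    then have "int p dvd int (p choose (m div 3))" by (rule p_choose_dvd)
    then show ?thesis using True unfolding rc_def by simp
  qed (simp add: rc_def)
  have D: "int p dvd rc p m - (sum f {..m} - sum f {m})" by (rule dvd_diff[OF C B])
  have "rc p m - (sum f {..m} - sum f {m}) = f m" using A by simp
  with D have "int p dvd f m" by (simp only:)
  then show ?thesis unfolding f_def by simp
qed

lemma tr_pp: "int p ^ 2 dvd tr p p - 1"
proof -
  define f where "f = (\<lambda>i. tr p i * ((-1)^(p-i) * int (p choose (p-i))))"
  have "sum f {..p} = 0" unfolding f_def conv' rc_def using not3p by simp
  moreover have "int p ^ 2 dvd (sum f {..p} - sum f {0, p})"
  proof (rule sum_split_dvd)
    show "\<forall>i\<in>{..p} - {0, p}. int p ^ 2 dvd f i"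
    proof
      fix i assume "i \<in> {..p} - {0, p}"
      then have i: "0 < i" "i < p" by auto
      then have "0 < p - i" "p - i < p" by auto
      then have c: "int p dvd (-1)^(p-i) * int (p choose (p-i))" using p_choose_dvd by simp
      have "int p dvd tr p i" using tr_p_dvd i by simp
      then show "int p ^ 2 dvd f i" unfolding f_def power2_eq_square using c by (rule mult_dvd_mono)
    qed
  qed auto
  moreover have "sum f {0, p} = -1 + tr p p"
    unfolding f_def using p3 odd_p by (simp add: tr_0)
  ultimately show ?thesis by (simp add: dvd_diff_commute)
qed

lemma tr_p1: "int p dvd tr p (p+1)"
proof -
  define f where "f = (\<lambda>i. tr p i * ((-1)^(p+1-i) * int (p choose (p+1-i))))"
  have A: "sum f {..p+1} = rc p (p+1)" unfolding f_def by (rule conv')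
  have B: "int p dvd (sum f {..p+1} - sum f {p+1})"
  proof (rule sum_split_dvd)
    show "\<forall>i\<in>{..p+1} - {p+1}. int p dvd f i"
    proof
      fix i assume i: "i \<in> {..p+1} - {p+1}"
      consider "i = 0" | "i = 1" | "2 \<le> i" "i \<le> p" using i by force
      then show "int p dvd f i"
      proof cases
        case 1 then show ?thesis unfolding f_def by (simp add: binomial_eq_0)
      next
        case 2 then show ?thesis unfolding f_def using tr_1[of p] by simp
      next
        case 3
        then have "0 < p+1-i" "p+1-i < p" by auto
        then show ?thesis unfolding f_def using p_choose_dvd by simp
      qed
    qed
  qed auto
  have C: "int p dvd rc p (p+1)"
  proof (cases "3 dvd (p+1)")
    case True
    then have "0 < (p+1) div 3" "(p+1) div 3 < p" using p3 by auto
    then show ?thesis using True unfolding rc_def using p_choose_dvd by simp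
  qed (simp add: rc_def)
  have D: "int p dvd rc p (p+1) - (sum f {..p+1} - sum f {p+1})" by (rule dvd_diff[OF C B])
  have "rc p (p+1) - (sum f {..p+1} - sum f {p+1}) = f (p+1)" using A by simp
  with D have "int p dvd f (p+1)" by (simp only:)
  then show ?thesis unfolding f_def by simp
qed

lemma tr_p2: "int p ^ 2 dvd tr p (p+2) - rc p (p+2) - int p"
proof -
  define f where "f = (\<lambda>i. tr p i * ((-1)^(p+2-i) * int (p choose (p+2-i))))"
  have "sum f {..p+2} = rc p (p+2)" unfolding f_def by (rule conv')
  moreover have "int p ^ 2 dvd (sum f {..p+2} - sum f {2, p, p+1, p+2})"
  proof (rule sum_split_dvd)
    show "\<forall>i\<in>{..p+2} - {2, p, p+1, p+2}. int p ^ 2 dvd f i"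
    proof
      fix i assume i: "i \<in> {..p+2} - {2, p, p+1, p+2}"
      consider "i < 2" | "3 \<le> i" "i < p" using i by force
      then show "int p ^ 2 dvd f i"
      proof cases
        case 1 then show ?thesis unfolding f_def by (simp add: binomial_eq_0)
      next
        case 2
        then have "0 < p+2-i" "p+2-i < p" by auto
        then have c: "int p dvd (-1)^(p+2-i) * int (p choose (p+2-i))" using p_choose_dvd by simp
        have "int p dvd tr p i" using tr_p_dvd 2 by simp
        then show ?thesis unfolding f_def power2_eq_square using c by (rule mult_dvd_mono)
      qed
    qed
  qed auto
  moreover have "sum f {2, p, p+1, p+2}
      = - (int p + int (p choose 2)) + tr p p * int (p choose 2) - int p * tr p (p+1) + tr p (p+2)"
  proof -
    have "p + 2 - p = 2" "p + 2 - (p+1) = 1" "p + 2 - 2 = p" by auto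
    have f2: "f 2 = - (int p + int (p choose 2))"
      unfolding f_def using odd_p by (simp add: tr_2)
    have fp: "f p = tr p p * int (p choose 2)" unfolding f_def by simp
    have fp1: "f (p+1) = - (int p * tr p (p+1))" unfolding f_def by simp
    have fp2: "f (p+2) = tr p (p+2)" unfolding f_def by simp
    have "sum f {2, p, p+1, p+2} = f 2 + (f p + (f (p+1) + f (p+2)))"
      using p3 by simp
    then show ?thesis unfolding f2 fp fp1 fp2 by simp
  qed
  moreover have "int p ^ 2 dvd (tr p p - 1) * int (p choose 2)" using tr_pp by simp
  moreover have "int p ^ 2 dvd int p * tr p (p+1)" using tr_p1 by (simp add: power2_eq_square)
  ultimately show ?thesis
  proof -
    assume a1: "sum f {..p+2} = rc p (p+2)"
      and a2: "int p ^ 2 dvd (sum f {..p+2} - sum f {2, p, p+1, p+2})"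
      and a3: "sum f {2, p, p+1, p+2}
      = - (int p + int (p choose 2)) + tr p p * int (p choose 2) - int p * tr p (p+1) + tr p (p+2)"
      and a4: "int p ^ 2 dvd (tr p p - 1) * int (p choose 2)"
      and a5: "int p ^ 2 dvd int p * tr p (p+1)"
    have eq: "tr p (p+2) - rc p (p+2) - int p
       = - (sum f {..p+2} - sum f {2, p, p+1, p+2}) - (tr p p - 1) * int (p choose 2) + int p * tr p (p+1)"
      unfolding a1 a3 by (simp add: algebra_simps)
    show ?thesis unfolding eq
      by (rule dvd_add[OF dvd_diff[OF iffD2[OF dvd_minus_iff a2] a4] a5])
  qed
qed

end




context
  fixes p :: nat
  assumes pp: "prime p" and p3: "p > 3"
begin

lemma binom_pm1: "k < p \<Longrightarrow> int p dvd ((-1)^k * int ((p-1) choose k) - 1)"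
proof (induction k)
  case 0 then show ?case by simp
next
  case (Suc k)
  have ps: "p = Suc (p-1)" using p3 by simp
  have "p choose Suc k = ((p-1) choose k) + ((p-1) choose Suc k)"
    by (subst ps) (rule binomial_Suc_Suc)
  then have e: "(-1)^(Suc k) * int ((p-1) choose Suc k)
      = (-1)^(Suc k) * int (p choose Suc k) + (-1)^k * int ((p-1) choose k)"
    by (simp add: algebra_simps)
  have "int p dvd int (p choose Suc k)" using Suc.prems by (intro p_choose_dvd[OF pp p3]) auto
  then have d1: "int p dvd (-1)^(Suc k) * int (p choose Suc k)" by simp
  have d2: "int p dvd (-1)^k * int ((p-1) choose k) - 1" using Suc by simp
  have "(-1)^(Suc k) * int ((p-1) choose Suc k) - 1
      = (-1)^(Suc k) * int (p choose Suc k) + ((-1)^k * int ((p-1) choose k) - 1)"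
    unfolding e by simp
  then show ?case using d1 d2 by (simp only: dvd_add)
qed

lemma rc_p2:
  assumes "3 dvd (p+2)"
  shows "int p ^ 2 dvd 2 * rc p (p+2) + 3 * int p"
proof -
  define j where "j = (p+2) div 3"
  have j3: "p + 2 = 3 * j" unfolding j_def using assms by simp
  have jpos: "0 < j" "j < p" using j3 p3 by auto
  define X where "X = (-1)^j * int (p choose j)"
  have rcX: "rc p (p+2) = X" unfolding rc_def X_def j_def using assms by simp
  define Y where "Y = (-1)^(j-1) * int ((p-1) choose (j-1))"
  have Y1: "int p dvd Y - 1" unfolding Y_def using binom_pm1 jpos by simp
  have "j * (p choose j) = p * ((p-1) choose (j-1))" using jpos(1) by (rule times_binomial_minus1_eq)
  then have "int j * int (p choose j) = int p * int ((p-1) choose (j-1))" by (metis of_nat_mult)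
  moreover have "((-1::int)^j) = - ((-1)^(j-1))" using jpos by (cases j) auto
  ultimately have jX: "int j * X = - (int p * Y)" unfolding X_def Y_def
    by (simp add: algebra_simps)
  have pX: "int p dvd X" unfolding X_def using p_choose_dvd[OF pp p3 jpos] by simp
  have "2 * X + 3 * int p = - 3 * (int p * (Y - 1)) - int p * X"
  proof -
    have "int p + 2 = 3 * int j" using j3 by linarith
    then have "(int p + 2) * X = 3 * (int j * X)" by simp
    then have "(int p + 2) * X = - 3 * (int p * Y)" unfolding jX by simp
    then show ?thesis by (simp add: algebra_simps)
  qed
  moreover have "int p ^ 2 dvd - 3 * (int p * (Y - 1))"
    using Y1 by (simp add: power2_eq_square)
  moreover have "int p ^ 2 dvd int p * X" using pX by (simp add: power2_eq_square)
  ultimately show ?thesis unfolding rcX by (simp add: dvd_diff)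
qed

definition e1 :: int where "e1 = (if p mod 3 = 1 then 2 else -1)"
definition e2 :: int where "e2 = (if p mod 3 = 1 then 1 else -2)"

lemma p_mod3: "p mod 3 = 1 \<or> p mod 3 = 2"
  using not3p[OF pp p3] by presburger

lemma Mp_cong: "int p ^ 2 dvd 2 * Mz p - 2 - int p * e2"
proof -
  have a: "int p ^ 2 dvd tr p p - 1" by (rule tr_pp[OF pp p3])
  have b: "int p ^ 2 dvd tr p (p+2) - rc p (p+2) - int p" by (rule tr_p2[OF pp p3])
  have eq: "2 * Mz p - 2 - int p * e2
      = 2 * (tr p p - 1) - 2 * (tr p (p+2) - rc p (p+2) - int p) - (2 * rc p (p+2) + 2 * int p + int p * e2)"
    unfolding Mz_tr by (simp add: algebra_simps)
  have c: "int p ^ 2 dvd 2 * rc p (p+2) + 2 * int p + int p * e2"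
  proof (cases "p mod 3 = 1")
    case True
    then have "3 dvd (p+2)" by presburger
    then have "int p ^ 2 dvd 2 * rc p (p+2) + 3 * int p" by (rule rc_p2)
    then show ?thesis using True unfolding e2_def by (simp add: algebra_simps)
  next
    case False
    then have "p mod 3 = 2" using p_mod3 by simp
    then have "\<not> 3 dvd (p+2)" by presburger
    then show ?thesis using False unfolding e2_def rc_def by simp
  qed
  show ?thesis unfolding eq by (rule dvd_diff[OF dvd_diff[OF dvd_mult[OF a] dvd_mult[OF b]] c])
qed

lemma s_cc: "m + 1 < p \<Longrightarrow> int p dvd tr (p-1) m - cc m \<and> int p dvd tr (p-1) (m+1) - cc (m+1)"
proof (induction m)
  case 0
  have "tr (p-1) 1 = int p - 1" using p3 tr_1[of "p-1"] by (simp add: of_nat_diff)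
  then show ?case by (simp add: tr_0 cc_def)
next
  case (Suc m)
  then have IH: "int p dvd tr (p-1) m - cc m" "int p dvd tr (p-1) (m+1) - cc (m+1)" by auto
  have ps: "p = Suc (p-1)" using p3 by simp
  have "tr p (Suc (Suc m)) = tr (p-1) (m+2) + tr (p-1) (m+1) + tr (p-1) m"
    by (subst ps) (rule tr_SucSuc)
  moreover have "int p dvd tr p (Suc (Suc m))" using Suc.prems by (intro tr_p_dvd[OF pp p3]) auto
  ultimately have "tr (p-1) (m+2) - cc (m+2)
      = tr p (Suc (Suc m)) - (tr (p-1) (m+1) - cc (m+1)) - (tr (p-1) m - cc m)"
    using cc_rec[of m] by simp
  then have "int p dvd tr (p-1) (m+2) - cc (m+2)"
    using IH \<open>int p dvd tr p (Suc (Suc m))\<close> by (simp only: dvd_diff)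
  then show ?case using IH by simp
qed

lemma Mp1_cong: "int p dvd Mz (p-1) - e1"
proof -
  define s where "s = tr (p-1)"
  have A: "int p dvd s (p-2) - cc (p-2)" "int p dvd s (p-1) - cc (p-1)"
    using s_cc[of "p-2"] p3 unfolding s_def by (auto simp: Suc_diff_Suc numeral_2_eq_2)
  have ps: "p = Suc (p-1)" using p3 by simp
  have r1: "tr p p = s p + s (p-1) + s (p-2)"
  proof -
    have "p = Suc (Suc (p-2))" using p3 by simp
    then have "tr p p = tr p (Suc (Suc (p-2)))" by simp
    also have "\<dots> = s (p-2+2) + s (p-2+1) + s (p-2)" unfolding s_def by (subst ps) (rule tr_SucSuc)
    finally show ?thesis using p3 by (simp add: numeral_2_eq_2 Suc_diff_Suc)
  qed
  have r2: "tr p (p+1) = s (p+1) + s p + s (p-1)"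
  proof -
    have "tr p (p+1) = tr p (Suc (Suc (p-1)))" using p3 by simp
    also have "\<dots> = s (p-1+2) + s (p-1+1) + s (p-1)" unfolding s_def by (subst ps) (rule tr_SucSuc)
    finally show ?thesis using p3 by simp
  qed
  have m: "Mz (p-1) = s (p-1) - s (p+1)"
    unfolding s_def Mz_tr using p3 by (simp add: numeral_2_eq_2)
  have eq: "Mz (p-1) - e1 = (s (p-1) - cc (p-1)) - (s (p-2) - cc (p-2)) + (tr p p - 1) - tr p (p+1)
             + (1 + cc (p-1) - cc (p-2) - e1)"
    unfolding m using r1 r2 by (simp add: algebra_simps)
  have e: "1 + cc (p-1) - cc (p-2) - e1 = 0"
  proof (cases "p mod 3 = 1")
    case True
    define k where "k = p div 3"
    have pk: "p = 3*k+1" unfolding k_def using True div_mult_mod_eq[of p 3] by simp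
    then have "k \<ge> 1" using p3 by simp
    then have "p - 1 = 3*k" "p - 2 = 3*(k-1) + 2" using pk by auto
    moreover have "\<And>x::nat. (3*x+2) mod 3 = 2" by presburger
    ultimately have "(p-1) mod 3 = 0" "(p-2) mod 3 = 2" by simp_all
    then show ?thesis using True unfolding cc_def e1_def by simp
  next
    case False
    then have "p mod 3 = 2" using p_mod3 by simp
    define k where "k = p div 3"
    have pk: "p = 3*k+2" unfolding k_def using \<open>p mod 3 = 2\<close> div_mult_mod_eq[of p 3] by simp
    then have "p - 1 = 3*k+1" "p - 2 = 3*k" by auto
    then have "(p-1) mod 3 = 1" "(p-2) mod 3 = 0" by simp_all
    then show ?thesis using False unfolding cc_def e1_def by simp
  qed
  have tpp: "int p dvd tr p p - 1" using tr_pp[OF pp p3] by (simp add: power2_eq_square dvd_mult_left)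
  have tp1: "int p dvd tr p (p+1)" by (rule tr_p1[OF pp p3])
  show ?thesis unfolding eq e using A tpp tp1 by (simp add: dvd_add dvd_diff)
qed

end




lemma legendre_val:
  assumes pp: "prime p" and p3: "p > 3"
  shows "Legendre (int p) 3 = (if p mod 3 = 1 then 1 else -1)"
proof -
  have n0: "\<not> [int p = 0] (mod 3)"
  proof
    assume "[int p = 0] (mod 3)"
    then have "(3::int) dvd int p" by (simp add: cong_0_iff)
    then have "3 dvd p" by presburger
    then show False using not3p[OF pp p3] by simp
  qed
  have q: "QuadRes 3 (int p) \<longleftrightarrow> p mod 3 = 1"
  proof
    assume "QuadRes 3 (int p)"
    then obtain y :: int where y: "[y^2 = int p] (mod 3)" unfolding QuadRes_def by blast
    then have "y^2 mod 3 = int p mod 3" by (simp add: cong_def)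
    moreover have "y^2 mod 3 = ((y mod 3)^2) mod 3" by (simp add: power_mod)
    moreover have "y mod 3 = 0 \<or> y mod 3 = 1 \<or> y mod 3 = 2" by presburger
    ultimately have "int p mod 3 = 0 \<or> int p mod 3 = 1" by (auto simp: power2_eq_square)
    moreover have "int p mod 3 = int (p mod 3)" by (simp add: zmod_int)
    ultimately have "p mod 3 = 0 \<or> p mod 3 = 1" by linarith
    then show "p mod 3 = 1" using not3p[OF pp p3] by auto
  next
    assume a: "p mod 3 = 1"
    have "int p mod 3 = int (p mod 3)" by (simp add: zmod_int)
    then have "int p mod 3 = 1" using a by simp
    then have "[1 ^ 2 = int p] (mod 3)" by (simp add: cong_def)
    then show "QuadRes 3 (int p)" unfolding QuadRes_def by blast
  qed
  show ?thesis unfolding Legendre_def using n0 q by simp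
qed

lemma Rf_pm1:
  assumes "p \<ge> 1"
  shows "4 * Rf (p-1) = -36 * int p^2 * (4*int p+5) * Mz (p-1)^2
      + 12 * int p * (int p+2) * (4*int p+3) * Mz (p-1) * (2 * Mz p)
      - (int p+2)^2 * (4*int p+1) * (2 * Mz p)^2"
proof -
  have a: "int (p-1) = int p - 1" using assms by simp
  have b: "p - 1 + 1 = p" using assms by simp
  show ?thesis unfolding Rf_def a b by (simp add: algebra_simps power2_eq_square)
qed

theorem part2:
  assumes pp: "prime p" and p3: "p > 3"
  shows "[(\<Sum>k=0..p-1. int ((2*k+1) * (motzkin k)^2)) = 12 * int p * Legendre (int p) 3] (mod (int p)^2)"
proof -
  define P where "P = int p"
  define T where "T = (\<Sum>k=0..p-1. int ((2*k+1) * (motzkin k)^2))"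
  have T1: "T = 1 + Sm (p-1)"
    unfolding T_def Sm_def by (simp add: sum.atLeast_Suc_atMost)
  have S4: "4 * Sm (p-1) = Rf (p-1)" using p3 by (intro S_closed_R) simp
  obtain v where v: "Mz (p-1) = e1 p + P * v"
    using Mp1_cong[OF pp p3] unfolding P_def by (metis dvdE diff_eq_eq add.commute)
  obtain w where w: "2 * Mz p = 2 + P * e2 p + P^2 * w"
    using Mp_cong[OF pp p3] unfolding P_def by (metis dvdE diff_eq_eq add.commute diff_diff_eq)
  define eps where "eps = Legendre (int p) 3"
  have key: "16 * T - 192 * P * eps = P^2 * (if p mod 3 = 1 then
      (-200) + (-16*w) + (144*v) + (-224*P) + (56*P*w) + (-384*P*v) + (63*P^2) + (156*P^2*w)
      + (-4*P^2*w^2) + (-348*P^2*v) + (72*P^2*v*w) + (-180*P^2*v^2) + (-4*P^3) + (46*P^3*w)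
      + (-20*P^3*w^2) + (48*P^3*v) + (132*P^3*v*w) + (-144*P^3*v^2) + (-8*P^4*w)
      + (-17*P^4*w^2) + (48*P^4*v*w) + (-4*P^5*w^2)
    else
      (-224) + (-16*w) + (144*v) + (64*P) + (-136*P*w) + (480*P*v) + (60*P^2) + (-120*P^2*w)
      + (-4*P^2*w^2) + (120*P^2*v) + (72*P^2*v*w) + (-180*P^2*v^2) + (-16*P^3) + (4*P^3*w)
      + (-20*P^3*w^2) + (-96*P^3*v) + (132*P^3*v*w) + (-144*P^3*v^2) + (16*P^4*w)
      + (-17*P^4*w^2) + (48*P^4*v*w) + (-4*P^5*w^2))"
  proof -
    have "16 * T = 16 + 4 * Rf (p-1)" unfolding T1 S4[symmetric] by simp
    also have "\<dots> = 16 - 36 * P^2 * (4*P+5) * Mz (p-1)^2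
      + 12 * P * (P+2) * (4*P+3) * Mz (p-1) * (2 * Mz p)
      - (P+2)^2 * (4*P+1) * (2 * Mz p)^2"
      using Rf_pm1[of p] p3 unfolding P_def by simp
    also have "\<dots> = 16 - 36 * P^2 * (4*P+5) * (e1 p + P * v)^2
      + 12 * P * (P+2) * (4*P+3) * (e1 p + P * v) * (2 + P * e2 p + P^2 * w)
      - (P+2)^2 * (4*P+1) * (2 + P * e2 p + P^2 * w)^2"
      unfolding v w ..
    finally have h: "16 * T = 16 - 36 * P^2 * (4*P+5) * (e1 p + P * v)^2
      + 12 * P * (P+2) * (4*P+3) * (e1 p + P * v) * (2 + P * e2 p + P^2 * w)
      - (P+2)^2 * (4*P+1) * (2 + P * e2 p + P^2 * w)^2" .
    have p5: "P^5 = P*P*P*P*P" by (simp add: eval_nat_numeral)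
    show ?thesis
    proof (cases "p mod 3 = 1")
      case True
      then have "e1 p = 2" "e2 p = 1" "eps = 1"
        unfolding e1_def[OF pp p3] e2_def[OF pp p3] eps_def legendre_val[OF pp p3] by simp_all
      then show ?thesis using True unfolding h by (simp add: algebra_simps power2_eq_square power3_eq_cube power4_eq_xxxx p5)
    next
      case False
      then have "e1 p = -1" "e2 p = -2" "eps = -1"
        unfolding e1_def[OF pp p3] e2_def[OF pp p3] eps_def legendre_val[OF pp p3] by simp_all
      then show ?thesis using False unfolding h by (simp add: algebra_simps power2_eq_square power3_eq_cube power4_eq_xxxx p5)
    qed
  qed
  then have "P^2 dvd 16 * (T - 12 * P * eps)" by (simp add: algebra_simps)
  moreover have "coprime (P^2) 16"
  proof -
    have "coprime p 2" using primes_coprime[OF pp, of 2] p3 by simp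
    then have "coprime p (2^4)" unfolding coprime_power_right_iff by simp
    then have c: "coprime (int p) (int (2^4))" by (simp only: coprime_int_iff)
    have "int (2^4) = (16::int)" by simp
    then have "coprime (int p) 16" using c by simp
    then show ?thesis unfolding P_def coprime_power_left_iff by simp
  qed
  ultimately have "P^2 dvd T - 12 * P * eps" using coprime_dvd_mult_right_iff by blast
  then show ?thesis unfolding T_def[symmetric] P_def eps_def by (simp add: cong_iff_dvd_diff)
qed



theorem theorem1p1:
  shows "(\<forall>n::nat. n \<ge> 1 \<longrightarrow>
            (2 / of_nat n) * (\<Sum>k=1..n. of_nat ((2*k+1) * (motzkin k)^2) :: rat) \<in> \<int>)
       \<and> (\<forall>p::nat. prime p \<and> p > 3 \<longrightarrow>
            [(\<Sum>k=0..p-1. int ((2*k+1) * (motzkin k)^2))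
               = 12 * int p * Legendre (int p) 3] (mod (int p)^2))"
  using part1 part2 by blast

end
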